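(* Let $G$ be a connected block graph with blocks $B_1, B_2,\ldots, B_t$, and let $k\ge 2$ be an integer. Then $$SW_k(G) = \sum_{i=1}^t N_k'(G \setminus B_i).$$
   Context: All graphs are finite, simple, undirected. A block of a graph is a maximal connected induced subgraph without cut vertices; a block graph is a graph in which every block is a complete graph (clique). For a connected graph $G$ and $S\subseteq V(G)$, the Steiner distance $d(S)$ is the minimum number of edges of a connected subgraph of $G$ whose vertex set contains $S$. The Steiner $k$-Wiener index is $SW_k(G)=\sum_{S\subseteq V(G),\,|S|=k} d(S)$. For a block $B_i$, $G\setminus B_i$ denotes the graph obtained from $G$ by deleting all edges of $B_i$ (keeping all vertices). For a graph $H$ with connected components $H_1,\dots,H_p$ (with $n(H_j)=|V(H_j)|$), and a tuple $(l_1,\dots,l_p)$ of nonnegative integers, let $\alpha(l_1,\dots,l_p)$ be the number of nonzero $l_j$ minus $1$. Define $$N_k'(H)=\sum_{\substack{l_1+\cdots+l_p=k\\ 0\le l_1,\dots,l_p<k}} \binom{n(H_1)}{l_1}\cdots\binom{n(H_p)}{l_p}\,\alpha(l_1,\dots,l_p)$$ if $p>1$, and $N_k'(H)=0$ if $H$ is connected. Conventions: $\binom{m}{0}=1$ and $\binom{m}{l}=0$ whenever $m<l$. *)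

theory Defs
  imports Main "HOL-Library.FuncSet"
begin

definition simple_graph :: "'a set \<Rightarrow> 'a set set \<Rightarrow> bool" where
  "simple_graph V E \<longleftrightarrow> finite V \<and> (\<forall>e\<in>E. \<exists>u v. u \<noteq> v \<and> u \<in> V \<and> v \<in> V \<and> e = {u, v})"

definition reach :: "'a set set \<Rightarrow> 'a \<Rightarrow> 'a \<Rightarrow> bool" where
  "reach F = (\<lambda>x y. {x, y} \<in> F)\<^sup>*\<^sup>*"

definition connected_graph :: "'a set \<Rightarrow> 'a set set \<Rightarrow> bool" where
  "connected_graph W F \<longleftrightarrow> W \<noteq> {} \<and> (\<forall>x\<in>W. \<forall>y\<in>W. reach F x y)"

definition induced_edges :: "'a set set \<Rightarrow> 'a set \<Rightarrow> 'a set set" where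
  "induced_edges E B = {e\<in>E. e \<subseteq> B}"

text \<open>(W, F) has no cut vertex: deleting any vertex v does not disconnect any two
  vertices that were connected (here W is connected, so: all remaining vertices stay connected).\<close>
definition no_cut_vertex :: "'a set \<Rightarrow> 'a set set \<Rightarrow> bool" where
  "no_cut_vertex W F \<longleftrightarrow>
     (\<forall>v\<in>W. \<forall>x\<in>W - {v}. \<forall>y\<in>W - {v}. reach F x y \<longrightarrow> reach {e\<in>F. v \<notin> e} x y)"

definition is_block :: "'a set \<Rightarrow> 'a set set \<Rightarrow> 'a set \<Rightarrow> bool" where
  "is_block V E B \<longleftrightarrow> B \<subseteq> V \<and> connected_graph B (induced_edges E B) \<and>
     no_cut_vertex B (induced_edges E B) \<and>
     (\<forall>B'. B \<subset> B' \<and> B' \<subseteq> V \<longrightarrow>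
        \<not> (connected_graph B' (induced_edges E B') \<and> no_cut_vertex B' (induced_edges E B')))"

definition blocks :: "'a set \<Rightarrow> 'a set set \<Rightarrow> 'a set set" where
  "blocks V E = {B. is_block V E B}"

definition block_graph :: "'a set \<Rightarrow> 'a set set \<Rightarrow> bool" where
  "block_graph V E \<longleftrightarrow> (\<forall>B\<in>blocks V E. \<forall>u\<in>B. \<forall>v\<in>B. u \<noteq> v \<longrightarrow> {u, v} \<in> E)"

definition steiner_dist :: "'a set \<Rightarrow> 'a set set \<Rightarrow> 'a set \<Rightarrow> nat" where
  "steiner_dist V E S = (LEAST m. \<exists>W F. S \<subseteq> W \<and> W \<subseteq> V \<and> F \<subseteq> E \<and> (\<forall>e\<in>F. e \<subseteq> W) \<and>
       connected_graph W F \<and> card F = m)"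

definition steiner_wiener :: "nat \<Rightarrow> 'a set \<Rightarrow> 'a set set \<Rightarrow> nat" where
  "steiner_wiener k V E = (\<Sum>S\<in>{S. S \<subseteq> V \<and> card S = k}. steiner_dist V E S)"

definition components :: "'a set \<Rightarrow> 'a set set \<Rightarrow> 'a set set" where
  "components V F = {{y\<in>V. reach F x y} | x. x \<in> V}"

text \<open>G \ B: delete the edges of block B, keep all vertices.\<close>
definition delete_block_edges :: "'a set set \<Rightarrow> 'a set \<Rightarrow> 'a set set" where
  "delete_block_edges E B = E - induced_edges E B"

text \<open>N'_k(H) for H = (V, F); tuples (l_1,...,l_p) are functions from the set of
  components to nat.\<close>
definition N'_k :: "nat \<Rightarrow> 'a set \<Rightarrow> 'a set set \<Rightarrow> int" where
  "N'_k k V F = (let C = components V F in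
     if card C \<le> 1 then 0 else
     (\<Sum>l\<in>{l. l \<in> C \<rightarrow>\<^sub>E {0..k} \<and> sum l C = k \<and> (\<forall>c\<in>C. l c < k)}.
        int (\<Prod>c\<in>C. card c choose l c) * (int (card {c\<in>C. l c \<noteq> 0}) - 1)))"

end

theory Submission
  imports Defs
begin
lemma reach_refl[simp]: "reach F x x"
  by (simp add: reach_def)
lemma reach_edge: "{x,y} \<in> F \<Longrightarrow> reach F x y"
  by (simp add: reach_def r_into_rtranclp)
lemma reach_trans: "reach F x y \<Longrightarrow> reach F y z \<Longrightarrow> reach F x z"
  unfolding reach_def by (rule rtranclp_trans)
lemma reach_step: "reach F x y \<Longrightarrow> {y,z} \<in> F \<Longrightarrow> reach F x z"
  by (rule reach_trans, assumption, erule reach_edge)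
lemma reach_induct[consumes 1, case_names base step]:
  assumes "reach F x y" "P x" "\<And>y z. reach F x y \<Longrightarrow> {y,z} \<in> F \<Longrightarrow> P y \<Longrightarrow> P z"
  shows "P y"
  using assms(1) unfolding reach_def
proof (induction rule: rtranclp_induct)
  case base then show ?case by (rule assms(2))
next
  case (step y z) then show ?case using assms(3)[of y z] unfolding reach_def by blast
qed
lemma reach_sym: "reach F x y \<Longrightarrow> reach F y x"
proof (induction rule: reach_induct)
  case base then show ?case by simp
next
  case (step y z)
  have "{z,y} \<in> F" using step(2) by (simp add: insert_commute)
  then show ?case by (rule reach_trans[OF reach_edge step(3)])
qed
lemma reach_mono: assumes "reach F x y" "F \<subseteq> F'" shows "reach F' x y"
  using assms(1)
proof (induction rule: reach_induct)
  case base then show ?case by simp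
next
  case (step y z) then show ?case using reach_step[of F' x y z] assms(2) by blast
qed

lemma reach_cross: "reach F x y \<Longrightarrow> P x \<Longrightarrow> \<not> P y \<Longrightarrow> \<exists>p q. {p,q} \<in> F \<and> P p \<and> \<not> P q"
proof (induction rule: reach_induct)
  case base then show ?case by simp
next
  case (step y z) then show ?case by blast
qed

lemma reach_map: assumes "reach F x y" "\<And>p q. {p,q} \<in> F \<Longrightarrow> f p = f q \<or> {f p, f q} \<in> D"
  shows "reach D (f x) (f y)"
  using assms(1)
proof (induction rule: reach_induct)
  case base then show ?case by simp
next
  case (step y z)
  from assms(2)[OF step(2)] show ?case
  proof
    assume "f y = f z" then show ?thesis using step(3) by simp
  next
    assume "{f y, f z} \<in> D" then show ?thesis by (rule reach_step[OF step(3)])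
  qed
qed

lemma reach_empty: "reach {} x y \<longleftrightarrow> x = y"
proof
  assume "reach {} x y" then show "x = y"
    by (induction rule: reach_induct) auto
qed simp

lemma reach_insert:
  "reach (insert {a,b} D) x y \<longleftrightarrow> reach D x y \<or> (reach D x a \<and> reach D b y) \<or> (reach D x b \<and> reach D a y)"
proof
  assume "reach (insert {a,b} D) x y"
  then show "reach D x y \<or> (reach D x a \<and> reach D b y) \<or> (reach D x b \<and> reach D a y)"
  proof (induction rule: reach_induct)
    case base then show ?case by simp
  next
    case (step y z)
    note IH = step(3)
    have T: "\<And>p q r. reach D p q \<Longrightarrow> reach D q r \<Longrightarrow> reach D p r" by (rule reach_trans)
    from step(2) have "{y,z} \<in> D \<or> (y = a \<and> z = b) \<or> (y = b \<and> z = a)"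
      by (auto simp: doubleton_eq_iff)
    then consider (e) "{y,z} \<in> D" | (ab) "y = a" "z = b" | (ba) "y = b" "z = a"
      by blast
    then show ?case
    proof cases
      case e
      then have yz: "reach D y z" by (rule reach_edge)
      from IH show ?thesis
      proof (elim disjE conjE)
        assume "reach D x y" then show ?thesis using T[OF _ yz] by blast
      next
        assume "reach D x a" "reach D b y" then show ?thesis using T[OF _ yz] by blast
      next
        assume "reach D x b" "reach D a y" then show ?thesis using T[OF _ yz] by blast
      qed
    next
      case ab
      from IH show ?thesis
      proof (elim disjE conjE)
        assume "reach D x y" then show ?thesis using ab by simp
      next
        assume "reach D x a" "reach D b y" then show ?thesis using ab by simp
      next
        assume h: "reach D x b" "reach D a y"
        then show ?thesis using ab by simp
      qed
    next
      case ba
      from IH show ?thesis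
      proof (elim disjE conjE)
        assume "reach D x y" then show ?thesis using ba by simp
      next
        assume h: "reach D x a" "reach D b y"
        then show ?thesis using ba by simp
      next
        assume h: "reach D x b" "reach D a y"
        then show ?thesis using ba by simp
      qed
    qed
  qed
next
  have e: "reach (insert {a,b} D) a b" by (rule reach_edge) simp
  have m: "\<And>x y. reach D x y \<Longrightarrow> reach (insert {a,b} D) x y" by (erule reach_mono) auto
  assume "reach D x y \<or> (reach D x a \<and> reach D b y) \<or> (reach D x b \<and> reach D a y)"
  then show "reach (insert {a,b} D) x y"
  proof (elim disjE)
    assume "reach D x y" then show ?thesis by (rule m)
  next
    assume h: "reach D x a \<and> reach D b y"
    show ?thesis using reach_trans[OF reach_trans[OF m[OF conjunct1[OF h]] e] m[OF conjunct2[OF h]]] .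
  next
    assume h: "reach D x b \<and> reach D a y"
    show ?thesis using reach_trans[OF reach_trans[OF m[OF conjunct1[OF h]] reach_sym[OF e]] m[OF conjunct2[OF h]]] .
  qed
qed

definition cls :: "'a set \<Rightarrow> 'a set set \<Rightarrow> 'a \<Rightarrow> 'a set" where
  "cls W D x = {y\<in>W. reach D x y}"

lemma components_cls: "components W D = cls W D ` W"
  by (auto simp: components_def cls_def)

lemma cls_eq: assumes "x \<in> W" "y \<in> W" shows "cls W D x = cls W D y \<longleftrightarrow> reach D x y"
proof
  assume "cls W D x = cls W D y"
  moreover have "y \<in> cls W D y" using assms by (simp add: cls_def)
  ultimately have "y \<in> cls W D x" by simp
  then show "reach D x y" by (simp add: cls_def)
next
  assume h: "reach D x y"
  show "cls W D x = cls W D y"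
  proof (rule set_eqI)
    fix z
    have "reach D x z \<longleftrightarrow> reach D y z"
      using reach_trans[OF h, of z] reach_trans[OF reach_sym[OF h], of z] by blast
    then show "z \<in> cls W D x \<longleftrightarrow> z \<in> cls W D y" by (simp add: cls_def)
  qed
qed

lemma card_image_le_factor:
  assumes "finite A" "\<And>x y. x\<in>A \<Longrightarrow> y\<in>A \<Longrightarrow> g x = g y \<Longrightarrow> f x = f y"
  shows "card (f ` A) \<le> card (g ` A)"
proof -
  have "f ` A = (\<lambda>z. f (inv_into A g z)) ` (g ` A)"
  proof (rule set_eqI, rule iffI)
    fix w assume "w \<in> f ` A"
    then obtain x where x: "x \<in> A" "w = f x" by blast
    have "inv_into A g (g x) \<in> A" using x by (simp add: inv_into_into)
    moreover have "g (inv_into A g (g x)) = g x" using x by (simp add: f_inv_into_f)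
    ultimately have "f (inv_into A g (g x)) = f x" using assms(2) x by blast
    then show "w \<in> (\<lambda>z. f (inv_into A g z)) ` (g ` A)" using x by force
  next
    fix w assume "w \<in> (\<lambda>z. f (inv_into A g z)) ` (g ` A)"
    then obtain x where x: "x \<in> A" "w = f (inv_into A g (g x))" by blast
    have "inv_into A g (g x) \<in> A" using x by (simp add: inv_into_into)
    then show "w \<in> f ` A" using x by blast
  qed
  then show ?thesis using card_image_le[of "g ` A" "\<lambda>z. f (inv_into A g z)"] assms(1) by simp
qed

lemma card_le_edges_components:
  assumes "finite W" "finite D" "\<forall>e\<in>D. \<exists>a b. a\<in>W \<and> b\<in>W \<and> e = {a,b}"
  shows "card W \<le> card D + card (components W D)"
  using assms(2,3)
proof (induction D rule: finite_induct)
  case empty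
  have "components W {} = (\<lambda>x. {x}) ` W" by (auto simp: components_def reach_empty)
  moreover have "card ((\<lambda>x. {x}) ` W) = card W" by (rule card_image) (auto simp: inj_on_def)
  ultimately show ?case by simp
next
  case (insert e D)
  obtain a b where ab: "a\<in>W" "b\<in>W" "e = {a,b}" using insert.prems by blast
  have IH: "card W \<le> card D + card (components W D)" using insert by auto
  define Wa where "Wa = {x\<in>W. \<not> reach D x a}"
  have 1: "cls W D ` W \<subseteq> insert (cls W D a) (cls W D ` Wa)"
  proof
    fix c assume "c \<in> cls W D ` W"
    then obtain x where x: "x \<in> W" "c = cls W D x" by blast
    show "c \<in> insert (cls W D a) (cls W D ` Wa)"
    proof (cases "reach D x a")
      case True then have "cls W D x = cls W D a" using cls_eq[of x W a D] x ab by simp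
      then show ?thesis using x by simp
    next
      case False then show ?thesis using x by (auto simp: Wa_def)
    qed
  qed
  have 2: "card (cls W D ` Wa) \<le> card (cls W (insert e D) ` Wa)"
  proof (rule card_image_le_factor)
    show "finite Wa" using assms(1) by (simp add: Wa_def)
  next
    fix x y assume xy: "x \<in> Wa" "y \<in> Wa" "cls W (insert e D) x = cls W (insert e D) y"
    have "x \<in> W" "y \<in> W" using xy(1,2) by (simp_all add: Wa_def)
    then have "reach (insert {a,b} D) x y" using cls_eq[of x W y "insert e D"] ab(3) xy(3) by simp
    then have r: "reach D x y \<or> (reach D x a \<and> reach D b y) \<or> (reach D x b \<and> reach D a y)"
      by (simp add: reach_insert)
    have "reach D x y"
    proof -
      have n: "\<not> reach D x a" "\<not> reach D y a" using xy by (auto simp: Wa_def)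
      show ?thesis using r
      proof (elim disjE conjE)
        assume "reach D x a" then show ?thesis using n by simp
      next
        assume "reach D a y" then show ?thesis using n reach_sym[of D a y] by simp
      qed simp
    qed
    then show "cls W D x = cls W D y" using cls_eq[of x W y D] \<open>x \<in> W\<close> \<open>y \<in> W\<close> by simp
  qed
  have 3: "card (cls W (insert e D) ` Wa) \<le> card (cls W (insert e D) ` W)"
    by (rule card_mono) (auto simp: Wa_def assms(1))
  have 4: "card (cls W D ` W) \<le> Suc (card (cls W D ` Wa))"
  proof -
    have "card (cls W D ` W) \<le> card (insert (cls W D a) (cls W D ` Wa))"
      by (rule card_mono[OF _ 1]) (simp add: Wa_def assms(1))
    also have "\<dots> \<le> Suc (card (cls W D ` Wa))" by (simp add: card_insert_if Wa_def assms(1))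
    finally show ?thesis .
  qed
  show ?case using IH 2 3 4 insert.hyps by (simp add: components_cls)
qed

lemma components_connected: "connected_graph W D \<Longrightarrow> components W D = {W}"
  unfolding connected_graph_def components_def by auto

definition walk :: "'a set set \<Rightarrow> 'a list \<Rightarrow> bool" where
  "walk D xs \<longleftrightarrow> xs \<noteq> [] \<and> (\<forall>i. Suc i < length xs \<longrightarrow> {xs!i, xs!Suc i} \<in> D)"

definition wedges :: "'a list \<Rightarrow> 'a set set" where
  "wedges xs = (\<lambda>i. {xs!i, xs!Suc i}) ` {i. Suc i < length xs}"

lemma walk_reach_seg:
  assumes "i \<le> j" "j < length xs" "\<And>t. i \<le> t \<Longrightarrow> t < j \<Longrightarrow> {xs!t, xs!Suc t} \<in> D"
  shows "reach D (xs!i) (xs!j)"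
  using assms
proof (induction j)
  case 0 then show ?case by simp
next
  case (Suc j)
  show ?case
  proof (cases "i = Suc j")
    case True then show ?thesis by simp
  next
    case False
    then have "reach D (xs!i) (xs!j)" using Suc by auto
    moreover have "{xs!j, xs!Suc j} \<in> D" using Suc.prems False by auto
    ultimately show ?thesis by (rule reach_step)
  qed
qed

lemma walk_reach_any:
  assumes "i < length xs" "j < length xs" "\<And>t. Suc t < length xs \<Longrightarrow> {xs!t, xs!Suc t} \<in> D"
  shows "reach D (xs!i) (xs!j)"
proof (cases "i \<le> j")
  case True then show ?thesis using walk_reach_seg[of i j xs D] assms by simp
next
  case False then show ?thesis using walk_reach_seg[of j i xs D] assms reach_sym by simp
qed

lemma reach_walk: assumes "reach D x y" shows "\<exists>xs. walk D xs \<and> hd xs = x \<and> last xs = y"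
  using assms unfolding reach_def
proof (induction rule: converse_rtranclp_induct)
  case base then show ?case by (intro exI[of _ "[y]"]) (simp add: walk_def)
next
  case (step x z)
  then obtain ys where ys: "walk D ys" "hd ys = z" "last ys = y" by blast
  have "walk D (x # ys)"
    unfolding walk_def
  proof (intro conjI allI impI)
    fix i assume i: "Suc i < length (x # ys)"
    show "{(x # ys) ! i, (x # ys) ! Suc i} \<in> D"
    proof (cases i)
      case 0 then show ?thesis using ys step(1) by (simp add: walk_def hd_conv_nth)
    next
      case (Suc i') then show ?thesis using ys(1) i by (simp add: walk_def)
    qed
  qed simp
  then show ?case using ys by (intro exI[of _ "x # ys"]) (simp add: walk_def)
qed

lemma wedges_sub: "walk D xs \<Longrightarrow> wedges xs \<subseteq> D"
  by (auto simp: walk_def wedges_def)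

lemma wedges_in_set: "e \<in> wedges xs \<Longrightarrow> e \<subseteq> set xs"
  by (auto simp: wedges_def)

lemma finite_wedges: "finite (wedges xs)"
proof -
  have "{i. Suc i < length xs} \<subseteq> {..<length xs}" by auto
  then have "finite {i. Suc i < length xs}" using finite_subset by blast
  then show ?thesis by (simp add: wedges_def)
qed

lemma card_wedges: "card (wedges xs) \<le> length xs - 1"
proof -
  have "{i. Suc i < length xs} = {..<length xs - 1}" by auto
  then show ?thesis unfolding wedges_def using card_image_le[of "{i. Suc i < length xs}" "\<lambda>i. {xs!i, xs!Suc i}"]
    by simp
qed

lemma walk_wedges_reach: "i < length xs \<Longrightarrow> j < length xs \<Longrightarrow> reach (wedges xs) (xs!i) (xs!j)"
  by (rule walk_reach_any) (auto simp: wedges_def)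

lemma walk_drop: "walk D xs \<Longrightarrow> i < length xs \<Longrightarrow> walk D (drop i xs)"
  by (auto simp: walk_def)

lemma walk_take: "walk D xs \<Longrightarrow> walk D (take (Suc i) xs)"
  by (auto simp: walk_def)

lemma walk_Cons: "walk D ys \<Longrightarrow> {x, hd ys} \<in> D \<Longrightarrow> walk D (x # ys)"
  unfolding walk_def
proof (intro conjI allI impI)
  fix i assume w: "ys \<noteq> [] \<and> (\<forall>i. Suc i < length ys \<longrightarrow> {ys ! i, ys ! Suc i} \<in> D)" "{x, hd ys} \<in> D"
    and i: "Suc i < length (x # ys)"
  show "{(x # ys) ! i, (x # ys) ! Suc i} \<in> D"
  proof (cases i)
    case 0 then show ?thesis using w by (simp add: hd_conv_nth)
  next
    case (Suc i') then show ?thesis using w i by simp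
  qed
qed simp

lemma walk_cut:
  assumes w: "walk D xs" and ij: "i < j" "j < length xs" "xs!i = xs!j"
  shows "walk D (take i xs @ drop j xs)"
  unfolding walk_def
proof (intro conjI allI impI)
  show "take i xs @ drop j xs \<noteq> []" using ij by simp
next
  fix t assume t: "Suc t < length (take i xs @ drop j xs)"
  have len: "length (take i xs) = i" using ij by simp
  have E: "\<And>s. Suc s < length xs \<Longrightarrow> {xs!s, xs!Suc s} \<in> D" using w by (simp add: walk_def)
  consider (a) "Suc t < i" | (b) "Suc t = i" | (c) "i \<le> t" by linarith
  then show "{(take i xs @ drop j xs) ! t, (take i xs @ drop j xs) ! Suc t} \<in> D"
  proof cases
    case a then show ?thesis using E[of t] ij by (simp add: nth_append)
  next
    case b
    have "(take i xs @ drop j xs) ! t = xs ! t" using b ij by (simp add: nth_append)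
    moreover have "(take i xs @ drop j xs) ! Suc t = xs ! j" using b ij by (simp add: nth_append)
    ultimately show ?thesis using E[of t] ij b by simp
  next
    case c
    have l: "Suc (j + (t - i)) < length xs" using t c ij by simp
    have "(take i xs @ drop j xs) ! t = xs ! (j + (t - i))" using c ij by (simp add: nth_append)
    moreover have "(take i xs @ drop j xs) ! Suc t = xs ! Suc (j + (t - i))"
      using c ij by (simp add: nth_append Suc_diff_le)
    ultimately show ?thesis using E[OF l] by simp
  qed
qed

definition good :: "'a set set \<Rightarrow> 'a set \<Rightarrow> bool" where
  "good E B \<longleftrightarrow> connected_graph B (induced_edges E B) \<and> no_cut_vertex B (induced_edges E B)"

lemma is_block_good: "is_block V E B \<longleftrightarrow> B \<subseteq> V \<and> good E B \<and> (\<forall>B'. B \<subset> B' \<and> B' \<subseteq> V \<longrightarrow> \<not> good E B')"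
  by (simp add: is_block_def good_def)

lemma induced_sub: "e \<in> induced_edges E B \<Longrightarrow> e \<subseteq> B"
  by (simp add: induced_edges_def)

lemma induced_mono: "B \<subseteq> B' \<Longrightarrow> induced_edges E B \<subseteq> induced_edges E B'"
  by (auto simp: induced_edges_def)

lemma good_reach: "good E B \<Longrightarrow> z \<in> B \<Longrightarrow> w \<in> B \<Longrightarrow> reach (induced_edges E B) z w"
  by (simp add: good_def connected_graph_def)

lemma good_reach_avoid:
  assumes "good E B" "z \<in> B" "w \<in> B" "z \<noteq> v" "w \<noteq> v"
  shows "reach {e \<in> induced_edges E B. v \<notin> e} z w"
proof (cases "v \<in> B")
  case True
  have "reach (induced_edges E B) z w" using good_reach[OF assms(1-3)] .
  then show ?thesis using assms True unfolding good_def no_cut_vertex_def by blast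
next
  case False
  have "{e \<in> induced_edges E B. v \<notin> e} = induced_edges E B"
    using False induced_sub by blast
  then show ?thesis using good_reach[OF assms(1-3)] by simp
qed

lemma good_edge: assumes "u \<noteq> v" "{u,v} \<in> E" shows "good E {u,v}"
proof -
  have e: "{u,v} \<in> induced_edges E {u,v}" using assms by (simp add: induced_edges_def)
  have c: "connected_graph {u,v} (induced_edges E {u,v})"
    unfolding connected_graph_def
  proof (intro conjI ballI)
    fix x y assume "x \<in> {u,v}" "y \<in> {u,v}"
    then show "reach (induced_edges E {u, v}) x y"
      using reach_edge[OF e] reach_sym[OF reach_edge[OF e]] by auto
  qed simp
  have "no_cut_vertex {u,v} (induced_edges E {u,v})"
    unfolding no_cut_vertex_def
  proof (intro ballI impI)
    fix w x y assume "w \<in> {u,v}" "x \<in> {u,v} - {w}" "y \<in> {u,v} - {w}"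
    then have "x = y" by auto
    then show "reach {e \<in> induced_edges E {u, v}. w \<notin> e} x y" by simp
  qed
  then show ?thesis using c by (simp add: good_def)
qed

lemma good_union:
  assumes g1: "good E B1" and g2: "good E B2" and u: "u \<in> B1" "u \<in> B2" "u' \<in> B1" "u' \<in> B2" "u \<noteq> u'"
  shows "good E (B1 \<union> B2)"
proof -
  let ?F = "induced_edges E (B1 \<union> B2)"
  have s1: "induced_edges E B1 \<subseteq> ?F" and s2: "induced_edges E B2 \<subseteq> ?F"
    by (auto simp: induced_edges_def)
  have hub: "reach ?F z u" if "z \<in> B1 \<union> B2" for z
  proof -
    { assume "z \<in> B1"
      then have "reach (induced_edges E B1) z u" using good_reach[OF g1 _ u(1)] by blast
      then have ?thesis using reach_mono[OF _ s1] by blast }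
    moreover
    { assume "z \<in> B2"
      then have "reach (induced_edges E B2) z u" using good_reach[OF g2 _ u(2)] by blast
      then have ?thesis using reach_mono[OF _ s2] by blast }
    ultimately show ?thesis using that by blast
  qed
  have c: "connected_graph (B1 \<union> B2) ?F"
    unfolding connected_graph_def
  proof (intro conjI ballI)
    fix x y assume "x \<in> B1 \<union> B2" "y \<in> B1 \<union> B2"
    then show "reach ?F x y" using reach_trans[OF hub[of x] reach_sym[OF hub[of y]]] by blast
  qed (use u in auto)
  have "no_cut_vertex (B1 \<union> B2) ?F"
    unfolding no_cut_vertex_def
  proof (intro ballI impI)
    fix v x y assume v: "v \<in> B1 \<union> B2" and x: "x \<in> B1 \<union> B2 - {v}" and y: "y \<in> B1 \<union> B2 - {v}"
    obtain w where w: "w \<in> B1" "w \<in> B2" "w \<noteq> v" using u by blast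
    let ?Fv = "{e \<in> ?F. v \<notin> e}"
    have h: "reach ?Fv z w" if "z \<in> B1 \<union> B2 - {v}" for z
    proof -
      { assume "z \<in> B1"
        then have "reach {e \<in> induced_edges E B1. v \<notin> e} z w" using good_reach_avoid[OF g1 _ w(1), of z v] w that by blast
        moreover have "{e \<in> induced_edges E B1. v \<notin> e} \<subseteq> ?Fv" using s1 by blast
        ultimately have ?thesis by (rule reach_mono) }
      moreover
      { assume "z \<in> B2"
        then have "reach {e \<in> induced_edges E B2. v \<notin> e} z w" using good_reach_avoid[OF g2 _ w(2), of z v] w that by blast
        moreover have "{e \<in> induced_edges E B2. v \<notin> e} \<subseteq> ?Fv" using s2 by blast
        ultimately have ?thesis by (rule reach_mono) }
      ultimately show ?thesis using that by blast
    qed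
    show "reach ?Fv x y" using reach_trans[OF h[OF x] reach_sym[OF h[OF y]]] .
  qed
  then show ?thesis using c by (simp add: good_def)
qed

lemma block_exists:
  assumes "finite V" "u \<in> V" "v \<in> V" "u \<noteq> v" "{u,v} \<in> E"
  shows "\<exists>B. is_block V E B \<and> u \<in> B \<and> v \<in> B"
proof -
  let ?P = "{B. {u,v} \<subseteq> B \<and> B \<subseteq> V \<and> good E B}"
  have "?P \<subseteq> Pow V" by auto
  moreover have "finite (Pow V)" using assms(1) by simp
  ultimately have fin: "finite ?P" by (rule finite_subset)
  have "good E {u,v}" using good_edge[OF assms(4,5)] .
  then have "{u,v} \<in> ?P" using assms(2,3) by simp
  from finite_has_maximal2[OF fin this] obtain m where
    m1: "m \<in> ?P" and m2: "{u,v} \<subseteq> m \<and> (\<forall>b\<in>?P. m \<subseteq> b \<longrightarrow> m = b)" ..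
  note m = m1 conjunct1[OF m2] conjunct2[OF m2]
  have "is_block V E m"
    unfolding is_block_good
  proof (intro conjI allI impI)
    fix B' assume "m \<subset> B' \<and> B' \<subseteq> V"
    then have "B' \<in> ?P \<Longrightarrow> False" using m(3) by blast
    then show "\<not> good E B'" using \<open>m \<subset> B' \<and> B' \<subseteq> V\<close> m(2) by blast
  next
    show "m \<subseteq> V" using m(1) by simp
  next
    show "good E m" using m(1) by simp
  qed
  then show ?thesis using m by blast
qed

lemma block_unique:
  assumes b1: "is_block V E B1" and b2: "is_block V E B2" and u: "u \<in> B1" "v \<in> B1" "u \<in> B2" "v \<in> B2" "u \<noteq> v"
  shows "B1 = B2"
proof -
  have "good E B1" "good E B2" using b1 b2 by (simp_all add: is_block_good)
  then have g: "good E (B1 \<union> B2)" using good_union[of E B1 B2 u v] u by blast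
  have V: "B1 \<union> B2 \<subseteq> V" using b1 b2 by (simp add: is_block_good)
  have "B2 \<subseteq> B1"
  proof (rule ccontr)
    assume "\<not> B2 \<subseteq> B1"
    then have "B1 \<subset> B1 \<union> B2" by blast
    then show False using b1 g V by (simp add: is_block_good)
  qed
  moreover have "B1 \<subseteq> B2"
  proof (rule ccontr)
    assume "\<not> B1 \<subseteq> B2"
    then have "B2 \<subset> B1 \<union> B2" by blast
    then show False using b2 g V by (simp add: is_block_good)
  qed
  ultimately show ?thesis by blast
qed

lemma simple_edge: "simple_graph V E \<Longrightarrow> e \<in> E \<Longrightarrow> \<exists>u v. u \<noteq> v \<and> u \<in> V \<and> v \<in> V \<and> e = {u,v}"
  by (simp add: simple_graph_def)

lemma simple_edge_sub: "simple_graph V E \<Longrightarrow> {x,y} \<in> E \<Longrightarrow> x \<in> V \<and> y \<in> V \<and> x \<noteq> y"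
proof -
  assume "simple_graph V E" "{x,y} \<in> E"
  then obtain u v where "u \<noteq> v" "u \<in> V" "v \<in> V" "{x,y} = {u,v}" using simple_edge by blast
  then show ?thesis by (auto simp: doubleton_eq_iff)
qed

lemma block_clique: "block_graph V E \<Longrightarrow> is_block V E B \<Longrightarrow> u\<in>B \<Longrightarrow> v\<in>B \<Longrightarrow> u\<noteq>v \<Longrightarrow> {u,v} \<in> E"
  by (simp add: block_graph_def blocks_def)

lemma block_sep:
  assumes sg: "simple_graph V E" and bg: "block_graph V E" and B: "is_block V E B"
    and ab: "a \<in> B" "b \<in> B" "a \<noteq> b"
  shows "\<not> reach (E - induced_edges E B) a b"
proof
  let ?D = "E - induced_edges E B"
  have gB: "good E B" and BV: "B \<subseteq> V" using B by (simp_all add: is_block_good)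
  assume "reach ?D a b"
  from reach_walk[OF this] obtain xs0 where xs0': "walk ?D xs0 \<and> hd xs0 = a \<and> last xs0 = b" ..
  note xs0 = conjunct1[OF xs0'] conjunct1[OF conjunct2[OF xs0']] conjunct2[OF conjunct2[OF xs0']]
  define P where "P xs \<longleftrightarrow> walk ?D xs \<and> hd xs \<in> B \<and> last xs \<in> B \<and> hd xs \<noteq> last xs" for xs
  have "P xs0" using xs0 ab by (simp add: P_def)
  from ex_has_least_nat[of P xs0 length, OF this] obtain xs where
    Pxs': "P xs \<and> (\<forall>ys. P ys \<longrightarrow> length xs \<le> length ys)" ..
  have Pxs: "P xs" and minl: "\<And>ys. P ys \<Longrightarrow> length xs \<le> length ys" using Pxs' by auto
  define n where "n = length xs"
  have wk: "walk ?D xs" using Pxs by (simp add: P_def)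
  then have ne: "xs \<noteq> []" by (simp add: walk_def)
  have hd0: "hd xs = xs!0" using ne by (simp add: hd_conv_nth)
  have last0: "last xs = xs!(n-1)" using ne by (simp add: last_conv_nth n_def)
  have w: "xs!0 \<in> B" "xs!(n-1) \<in> B" "xs!0 \<noteq> xs!(n-1)"
    using Pxs hd0 last0 by (simp_all add: P_def)
  have Ew: "\<And>t. Suc t < n \<Longrightarrow> {xs!t, xs!Suc t} \<in> E" and nIE: "\<And>t. Suc t < n \<Longrightarrow> {xs!t, xs!Suc t} \<notin> induced_edges E B"
    using wk by (auto simp: walk_def n_def)
  have n2: "n \<ge> 2"
  proof (rule ccontr)
    assume "\<not> n \<ge> 2"
    then have "n = 1" using ne n_def by (cases n) auto
    then show False using w by simp
  qed
  have dist: "distinct xs"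
  proof (rule ccontr)
    assume "\<not> distinct xs"
    then obtain i j where ij0: "i < n" "j < n" "i \<noteq> j" "xs!i = xs!j"
      by (auto simp: distinct_conv_nth n_def)
    have "\<exists>i j. i < j \<and> j < n \<and> xs!i = xs!j"
    proof (cases "i < j")
      case True then show ?thesis using ij0 by blast
    next
      case False then have "j < i" using ij0 by simp
      then show ?thesis using ij0 by metis
    qed
    then obtain i j where ij: "i < j" "j < n" "xs!i = xs!j" by blast
    let ?ys = "take i xs @ drop j xs"
    have wy: "walk ?D ?ys" using walk_cut[OF wk ij(1) _ ij(3)] ij(2) n_def by simp
    have hy: "hd ?ys = xs!0"
    proof (cases "i = 0")
      case True then show ?thesis using ij n_def by (simp add: hd_drop_conv_nth)
    next
      case False then show ?thesis using ij n_def ne by (simp add: hd_append hd_conv_nth)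
    qed
    have ly: "last ?ys = xs!(n-1)" using ij n_def last0 by (simp add: last_append)
    have "P ?ys" using wy hy ly w by (simp add: P_def)
    moreover have "length ?ys < n" using ij n_def by simp
    ultimately show False using minl[of ?ys] n_def by simp
  qed
  have inter: "xs!i \<notin> B" if "0 < i" "i < n - 1" for i
  proof
    assume xi: "xs!i \<in> B"
    let ?ys = "take (Suc i) xs"
    have "walk ?D ?ys" by (rule walk_take[OF wk])
    moreover have "hd ?ys = xs!0" using ne by (simp add: hd_conv_nth)
    moreover have "last ?ys = xs!i" using that n_def by (simp add: take_Suc_conv_app_nth)
    moreover have "xs!0 \<noteq> xs!i" using nth_eq_iff_index_eq[OF dist, of 0 i] that n_def ne by auto
    ultimately have "P ?ys" using w xi by (simp add: P_def)
    moreover have "length ?ys < n" using that n_def by simp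
    ultimately show False using minl[of ?ys] n_def by simp
  qed
  have n3: "n \<ge> 3"
  proof (rule ccontr)
    assume "\<not> n \<ge> 3"
    then have n2': "n = 2" using n2 by simp
    then have "{xs!0, xs!1} \<in> E" using Ew[of 0] by simp
    moreover have "{xs!0, xs!1} \<subseteq> B" using w n2' by simp
    ultimately have "{xs!0, xs!1} \<in> induced_edges E B" by (simp add: induced_edges_def)
    then show False using nIE[of 0] n2' by simp
  qed
  define X where "X = B \<union> set xs"
  have XV: "X \<subseteq> V"
  proof -
    have "x \<in> V" if xin: "x \<in> set xs" for x
    proof -
      obtain i where i: "i < n" "x = xs!i" using xin by (auto simp: in_set_conv_nth n_def)
      show ?thesis
      proof (cases "Suc i < n")
        case True then show ?thesis using simple_edge_sub[OF sg Ew[OF True]] i by simp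
      next
        case False
        then have "Suc (i - 1) < n" "Suc (i - 1) = i" using i n3 by auto
        then show ?thesis using simple_edge_sub[OF sg Ew[of "i - 1"]] i by simp
      qed
    qed
    then show ?thesis using BV by (auto simp: X_def)
  qed
  have BX: "B \<subset> X"
  proof -
    have "xs!1 \<in> set xs" using n3 n_def by simp
    moreover have "xs!1 \<notin> B" using inter[of 1] n3 by simp
    ultimately show ?thesis by (auto simp: X_def)
  qed
  let ?F = "induced_edges E X"
  have pe: "{xs!t, xs!Suc t} \<in> ?F" if "Suc t < n" for t
  proof -
    have "{xs!t, xs!Suc t} \<subseteq> set xs" using that n_def by simp
    then show ?thesis using Ew[OF that] by (auto simp: induced_edges_def X_def)
  qed
  have IEB: "induced_edges E B \<subseteq> ?F" by (rule induced_mono) (simp add: X_def)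
  have hubc: "reach ?F z (xs!0)" if "z \<in> X" for z
  proof (cases "z \<in> B")
    case True
    show ?thesis using reach_mono[OF good_reach[OF gB True w(1)] IEB] .
  next
    case False
    then have "z \<in> set xs" using that by (simp add: X_def)
    then obtain i where i: "i < n" "z = xs!i" by (auto simp: in_set_conv_nth n_def)
    have "reach ?F (xs!i) (xs!0)" by (rule walk_reach_any) (use i n2 pe n_def in auto)
    then show ?thesis using i by simp
  qed
  have cX: "connected_graph X ?F"
    unfolding connected_graph_def
  proof (intro conjI ballI)
    fix x y assume "x \<in> X" "y \<in> X"
    then show "reach ?F x y" using reach_trans[OF hubc[of x] reach_sym[OF hubc[of y]]] by blast
  qed (use BX in auto)
  have ncX: "no_cut_vertex X ?F"
    unfolding no_cut_vertex_def
  proof (intro ballI impI)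
    fix v x y assume v: "v \<in> X" and x: "x \<in> X - {v}" and y: "y \<in> X - {v}"
    let ?Fv = "{e \<in> ?F. v \<notin> e}"
    have seg: "reach ?Fv (xs!i) (xs!j)" if "i \<le> j" "j < n" "\<And>t. i \<le> t \<Longrightarrow> t \<le> j \<Longrightarrow> xs!t \<noteq> v" for i j
    proof (rule walk_reach_seg[OF that(1)])
      show "j < length xs" using that n_def by simp
    next
      fix t assume t: "i \<le> t" "t < j"
      have "{xs!t, xs!Suc t} \<in> ?F" using pe[of t] t that by simp
      moreover have "xs!t \<noteq> v" "xs!Suc t \<noteq> v" using that(3)[of t] that(3)[of "Suc t"] t by auto
      ultimately show "{xs!t, xs!Suc t} \<in> ?Fv" by simp
    qed
    have Bv: "reach ?Fv z w" if "z \<in> B" "w \<in> B" "z \<noteq> v" "w \<noteq> v" for z w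
    proof -
      have "reach {e \<in> induced_edges E B. v \<notin> e} z w" using good_reach_avoid[OF gB that] .
      moreover have "{e \<in> induced_edges E B. v \<notin> e} \<subseteq> ?Fv" using IEB by blast
      ultimately show ?thesis by (rule reach_mono)
    qed
    have idx: "\<exists>i. i < n \<and> z = xs!i" if "z \<in> set xs" for z
      using that by (auto simp: in_set_conv_nth n_def)
    have "\<exists>h. \<forall>z\<in>X - {v}. reach ?Fv z h"
    proof (cases "v \<in> B")
      case vB: True
      have intv: "xs!t \<noteq> v" if "0 < t" "t < n - 1" for t using inter[OF that] vB by blast
      show ?thesis
      proof (cases "xs!0 \<noteq> v")
        case True
        show ?thesis
        proof (intro exI ballI)
          fix z assume z: "z \<in> X - {v}"
          show "reach ?Fv z (xs!0)"
          proof (cases "z \<in> B")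
            case True then show ?thesis using Bv[of z "xs!0"] w(1) z \<open>xs!0 \<noteq> v\<close> by simp
          next
            case False
            then obtain i where i: "i < n" "z = xs!i" using idx z by (auto simp: X_def)
            have "i \<noteq> 0" using False i w(1) by (cases "i = 0") auto
            have "i \<noteq> n - 1" using False i w(2) by (cases "i = n - 1") auto
            have "reach ?Fv (xs!0) (xs!i)"
            proof (rule seg)
              fix t assume t: "0 \<le> t" "t \<le> i"
              show "xs!t \<noteq> v"
              proof (cases "t = 0")
                case True then show ?thesis using \<open>xs!0 \<noteq> v\<close> by simp
              next
                case False then show ?thesis using intv[of t] t i \<open>i \<noteq> n - 1\<close> by simp
              qed
            qed (use i in auto)
            from reach_sym[OF this] show ?thesis using i(2) by simp
          qed
        qed
      next
        case False
        then have hv: "xs!(n-1) \<noteq> v" using w by auto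
        show ?thesis
        proof (intro exI ballI)
          fix z assume z: "z \<in> X - {v}"
          show "reach ?Fv z (xs!(n-1))"
          proof (cases "z \<in> B")
            case True then show ?thesis using Bv[of z "xs!(n-1)"] w(2) z hv by simp
          next
            case False
            then obtain i where i: "i < n" "z = xs!i" using idx z by (auto simp: X_def)
            have i0: "i \<noteq> 0" "i \<noteq> n - 1" using False i w(1) w(2) by (cases "i = 0"; cases "i = n - 1"; auto)+
            have "reach ?Fv (xs!i) (xs!(n-1))"
            proof (rule seg)
              fix t assume t: "i \<le> t" "t \<le> n - 1"
              show "xs!t \<noteq> v"
              proof (cases "t = n - 1")
                case True then show ?thesis using hv by simp
              next
                case False then show ?thesis using intv[of t] t i0 by simp
              qed
            qed (use i in auto)
            then show ?thesis using i by simp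
          qed
        qed
      qed
    next
      case vB: False
      then obtain j where j: "j < n" "v = xs!j" using v idx by (auto simp: X_def)
      have j0: "j \<noteq> 0" "j \<noteq> n - 1" using j w(1) w(2) vB by (cases "j = 0"; cases "j = n - 1"; auto)+
      have neq: "xs!t \<noteq> v" if "t < n" "t \<noteq> j" for t
        using nth_eq_iff_index_eq[OF dist, of t j] that j n_def by auto
      show ?thesis
      proof (intro exI ballI)
        fix z assume z: "z \<in> X - {v}"
        show "reach ?Fv z (xs!0)"
        proof (cases "z \<in> B")
          have "xs!0 \<noteq> v" using w(1) vB by blast
          case True then show ?thesis using Bv[of z "xs!0"] w(1) z \<open>xs!0 \<noteq> v\<close> by simp
        next
          case False
          then obtain i where i: "i < n" "z = xs!i" using idx z by (auto simp: X_def)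
          have "i \<noteq> j" using z i j by auto
          show ?thesis
          proof (cases "i < j")
            case True
            have "reach ?Fv (xs!0) (xs!i)"
              by (rule seg) (use i True neq in auto)
            from reach_sym[OF this] show ?thesis using i(2) by simp
          next
            case False
            then have ji: "j < i" using \<open>i \<noteq> j\<close> by simp
            have "reach ?Fv (xs!i) (xs!(n-1))"
              by (rule seg) (use i ji neq in auto)
            moreover have "xs!(n-1) \<noteq> v" "xs!0 \<noteq> v" using w vB by auto
            then have "reach ?Fv (xs!(n-1)) (xs!0)" using Bv[of "xs!(n-1)" "xs!0"] w by simp
            ultimately show ?thesis using reach_trans i(2) by simp
          qed
        qed
      qed
    qed
    then obtain h where h: "\<forall>z\<in>X - {v}. reach ?Fv z h" by blast
    show "reach ?Fv x y" using reach_trans[OF bspec[OF h x] reach_sym[OF bspec[OF h y]]] .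
  qed
  have "good E X" using cX ncX by (simp add: good_def)
  then show False using B BX XV by (simp add: is_block_good)
qed

locale bgraph =
  fixes V :: "'a set" and E :: "'a set set"
  assumes sg: "simple_graph V E" and conn: "connected_graph V E" and bg: "block_graph V E"
begin

definition GB :: "'a set \<Rightarrow> 'a set set" where "GB B = E - induced_edges E B"
definition comp :: "'a set \<Rightarrow> 'a \<Rightarrow> 'a set" where "comp B = cls V (GB B)"

lemma finV: "finite V" using sg by (simp add: simple_graph_def)

lemma E_Pow: "E \<subseteq> Pow V"
proof
  fix e assume "e \<in> E"
  then obtain u v where "u \<noteq> v" "u \<in> V" "v \<in> V" "e = {u,v}" using simple_edge[OF sg] by blast
  then show "e \<in> Pow V" by simp
qed

lemma finE: "finite E" using finite_subset[OF E_Pow] finV by simp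

lemma fin_blocks: "finite (blocks V E)"
proof -
  have "blocks V E \<subseteq> Pow V" by (auto simp: blocks_def is_block_def)
  then show ?thesis using finite_subset finV by blast
qed

lemma edge_block: assumes "e \<in> E" shows "\<exists>B\<in>blocks V E. e \<in> induced_edges E B"
proof -
  obtain u v where uv: "u \<noteq> v" "u \<in> V" "v \<in> V" "e = {u,v}" using simple_edge[OF sg assms] by blast
  from block_exists[OF finV uv(2,3,1)] assms uv(4) obtain B where B: "is_block V E B \<and> u \<in> B \<and> v \<in> B"
    by blast
  then have "e \<in> induced_edges E B" using assms uv by (simp add: induced_edges_def)
  then show ?thesis using B by (auto simp: blocks_def)
qed

lemma edge_block_unique:
  assumes "B \<in> blocks V E" "B' \<in> blocks V E" "e \<in> induced_edges E B" "e \<in> induced_edges E B'"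
  shows "B = B'"
proof -
  have "e \<in> E" using assms(3) by (simp add: induced_edges_def)
  then obtain u v where uv: "u \<noteq> v" "e = {u,v}" using simple_edge[OF sg] by blast
  have "u \<in> B" "v \<in> B" "u \<in> B'" "v \<in> B'" using assms(3,4) uv by (auto simp: induced_edges_def)
  then show ?thesis using block_unique[of V E B B' u v] assms(1,2) uv(1) by (simp add: blocks_def)
qed

lemma comp_eq: "x \<in> V \<Longrightarrow> y \<in> V \<Longrightarrow> comp B x = comp B y \<longleftrightarrow> reach (GB B) x y"
  unfolding comp_def by (rule cls_eq)

lemma card_block_part:
  assumes W: "W \<subseteq> V" "W \<noteq> {}" "F \<subseteq> E" "\<forall>e\<in>F. e \<subseteq> W" "connected_graph W F"
  shows "card (comp B ` W) \<le> card (F \<inter> induced_edges E B) + 1"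
proof -
  let ?Q = "comp B ` W"
  let ?D = "(\<lambda>e. comp B ` e) ` (F \<inter> induced_edges E B)"
  have finF: "finite F" using finite_subset[OF W(3) finE] .
  have finW: "finite W" using finite_subset[OF W(1) finV] .
  have De: "\<forall>e\<in>?D. \<exists>a b. a\<in>?Q \<and> b\<in>?Q \<and> e = {a,b}"
  proof
    fix d assume "d \<in> ?D"
    then obtain e where e: "e \<in> F" "d = comp B ` e" by blast
    then obtain p q where "p \<noteq> q" "e = {p,q}" using simple_edge[OF sg] W(3) by blast
    moreover have "e \<subseteq> W" using W(4) e by blast
    ultimately show "\<exists>a b. a\<in>?Q \<and> b\<in>?Q \<and> d = {a,b}" using e by auto
  qed
  have cQ: "connected_graph ?Q ?D"
    unfolding connected_graph_def
  proof (intro conjI ballI)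
    show "?Q \<noteq> {}" using W(2) by simp
  next
    fix c1 c2 assume "c1 \<in> ?Q" "c2 \<in> ?Q"
    then obtain x y where xy: "x \<in> W" "y \<in> W" "c1 = comp B x" "c2 = comp B y" by blast
    have "reach F x y" using W(5) xy by (simp add: connected_graph_def)
    then have "reach ?D (comp B x) (comp B y)"
    proof (rule reach_map)
      fix p q assume pq: "{p,q} \<in> F"
      then have pqW: "p \<in> V" "q \<in> V" using W(4) W(1) by blast+
      show "comp B p = comp B q \<or> {comp B p, comp B q} \<in> ?D"
      proof (cases "{p,q} \<in> induced_edges E B")
        case True
        then have "comp B ` {p,q} \<in> ?D" using pq by blast
        then show ?thesis by simp
      next
        case False
        then have "{p,q} \<in> GB B" using pq W(3) by (auto simp: GB_def)
        then have "reach (GB B) p q" by (rule reach_edge)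
        then show ?thesis using comp_eq[OF pqW] by simp
      qed
    qed
    then show "reach ?D c1 c2" using xy by simp
  qed
  have "card ?Q \<le> card ?D + card (components ?Q ?D)"
    by (rule card_le_edges_components) (use finW finF De in auto)
  also have "components ?Q ?D = {?Q}" using cQ by (rule components_connected)
  also have "card ?D \<le> card (F \<inter> induced_edges E B)" using finF by (simp add: card_image_le)
  finally show ?thesis by simp
qed

lemma card_F_split:
  assumes "F \<subseteq> E"
  shows "card F = (\<Sum>B\<in>blocks V E. card (F \<inter> induced_edges E B))"
proof -
  have "F = (\<Union>B\<in>blocks V E. F \<inter> induced_edges E B)"
    using edge_block assms by blast
  moreover have "card (\<Union>B\<in>blocks V E. F \<inter> induced_edges E B) = (\<Sum>B\<in>blocks V E. card (F \<inter> induced_edges E B))"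
  proof (rule card_UN_disjoint)
    show "finite (blocks V E)" by (rule fin_blocks)
  next
    show "\<forall>B\<in>blocks V E. finite (F \<inter> induced_edges E B)" using finite_subset[OF assms finE] by simp
  next
    show "\<forall>B\<in>blocks V E. \<forall>B'\<in>blocks V E. B \<noteq> B' \<longrightarrow> F \<inter> induced_edges E B \<inter> (F \<inter> induced_edges E B') = {}"
      using edge_block_unique by blast
  qed
  ultimately show ?thesis by simp
qed

lemma lower:
  assumes "S \<subseteq> W" "W \<subseteq> V" "F \<subseteq> E" "\<forall>e\<in>F. e \<subseteq> W" "connected_graph W F"
  shows "(\<Sum>B\<in>blocks V E. card (comp B ` S) - 1) \<le> card F"
proof -
  have Wne: "W \<noteq> {}" using assms(5) by (simp add: connected_graph_def)
  have "card (comp B ` S) - 1 \<le> card (F \<inter> induced_edges E B)" for B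
  proof -
    have "card (comp B ` S) \<le> card (comp B ` W)"
      by (rule card_mono) (use finite_subset[OF assms(2) finV] assms(1) in auto)
    then show ?thesis using card_block_part[OF assms(2) Wne assms(3,4,5), of B] by simp
  qed
  then have "(\<Sum>B\<in>blocks V E. card (comp B ` S) - 1) \<le> (\<Sum>B\<in>blocks V E. card (F \<inter> induced_edges E B))"
    by (rule sum_mono)
  then show ?thesis using card_F_split[OF assms(3)] by simp
qed

definition meets :: "'a set \<Rightarrow> 'a \<Rightarrow> 'a set \<Rightarrow> bool" where
  "meets B x X \<longleftrightarrow> (\<exists>y\<in>X. reach (GB B) x y)"

lemma walk_in_V: assumes "walk E xs" "hd xs \<in> V" shows "set xs \<subseteq> V"
proof
  fix x assume "x \<in> set xs"
  then obtain i where i: "i < length xs" "x = xs!i" by (auto simp: in_set_conv_nth)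
  have ne: "xs \<noteq> []" using assms(1) by (simp add: walk_def)
  show "x \<in> V"
  proof (cases i)
    case 0 then show ?thesis using i assms(2) ne by (simp add: hd_conv_nth)
  next
    case (Suc j)
    then have "{xs!j, xs!Suc j} \<in> E" using assms(1) i by (simp add: walk_def)
    then show ?thesis using simple_edge_sub[OF sg] i Suc by simp
  qed
qed

lemma walk_to_W:
  assumes W: "W \<subseteq> V" "W \<noteq> {}" "F \<subseteq> E" "\<forall>e\<in>F. e \<subseteq> W" "connected_graph W F"
  shows "v \<in> V \<Longrightarrow> card {B\<in>blocks V E. \<not> meets B v W} = n \<Longrightarrow>
    \<exists>xs. walk E xs \<and> hd xs = v \<and> last xs \<in> W \<and> length xs \<le> Suc n \<and>
       (\<forall>x\<in>set xs. \<forall>B\<in>blocks V E. meets B x (insert v W))"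
proof (induction n arbitrary: v rule: less_induct)
  case (less n v)
  show ?case
  proof (cases "v \<in> W")
    case True
    have "walk E [v]" by (simp add: walk_def)
    moreover have "\<forall>x\<in>set [v]. \<forall>B\<in>blocks V E. meets B x (insert v W)"
      by (auto simp: meets_def)
    ultimately show ?thesis using True by (intro exI[of _ "[v]"]) simp
  next
    case vW: False
    obtain w0 where w0: "w0 \<in> W" using W(2) by blast
    have "reach E v w0" using conn less.prems(1) w0 W(1) by (auto simp: connected_graph_def)
    from reach_walk[OF this] obtain xs0 where xs0: "walk E xs0 \<and> hd xs0 = v \<and> last xs0 = w0" ..
    define P where "P ys \<longleftrightarrow> walk E ys \<and> hd ys = v \<and> last ys \<in> W" for ys
    have "P xs0" using xs0 w0 by (simp add: P_def)
    from ex_has_least_nat[of P xs0 length, OF this] obtain xs where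
      Pxs': "P xs \<and> (\<forall>ys. P ys \<longrightarrow> length xs \<le> length ys)" ..
    have Pxs: "P xs" and minl: "\<And>ys. P ys \<Longrightarrow> length xs \<le> length ys" using Pxs' by auto
    have wk: "walk E xs" and hv: "hd xs = v" and lW: "last xs \<in> W" using Pxs by (simp_all add: P_def)
    have ne: "xs \<noteq> []" using wk by (simp add: walk_def)
    have x0: "xs!0 = v" using hv ne by (simp add: hd_conv_nth)
    have m2: "length xs \<ge> 2"
    proof (rule ccontr)
      assume "\<not> length xs \<ge> 2"
      then have "length xs = 1" using ne by (cases xs) (auto simp: not_le)
      then have "last xs = v" using x0 ne by (simp add: last_conv_nth)
      then show False using lW vW by simp
    qed
    define x1 where "x1 = xs!1"
    have e1: "{v, x1} \<in> E" using wk m2 x0 by (auto simp: walk_def x1_def)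
    have vx1: "v \<noteq> x1" "x1 \<in> V" using simple_edge_sub[OF sg e1] by auto
    obtain B0 where B0: "B0 \<in> blocks V E" "{v,x1} \<in> induced_edges E B0" using edge_block[OF e1] by blast
    have B0b: "is_block V E B0" using B0(1) by (simp add: blocks_def)
    have vB0: "v \<in> B0" "x1 \<in> B0" using B0(2) by (auto simp: induced_edges_def)
    have claimA: "reach (GB B0) x1 (last xs)"
    proof -
      have "reach (GB B0) (xs!1) (xs!(length xs - 1))"
      proof (rule walk_reach_seg)
        show "1 \<le> length xs - 1" "length xs - 1 < length xs" using m2 by auto
      next
        fix t assume t: "1 \<le> t" "t < length xs - 1"
        have eE: "{xs!t, xs!Suc t} \<in> E" using wk t by (simp add: walk_def)
        show "{xs!t, xs!Suc t} \<in> GB B0"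
        proof (rule ccontr)
          assume "{xs!t, xs!Suc t} \<notin> GB B0"
          then have "{xs!t, xs!Suc t} \<in> induced_edges E B0" using eE by (simp add: GB_def)
          then have uB: "xs!Suc t \<in> B0" by (simp add: induced_edges_def)
          let ?zs = "drop (Suc t) xs"
          have wz: "walk E ?zs" using walk_drop[OF wk] t by simp
          have hz: "hd ?zs = xs!Suc t" using t by (simp add: hd_drop_conv_nth)
          have lz: "last ?zs = last xs" using t by simp
          show False
          proof (cases "xs!Suc t = v")
            case True
            then have "P ?zs" using wz hz lz lW by (simp add: P_def)
            moreover have "length ?zs < length xs" using t by simp
            ultimately show False using minl[of ?zs] by simp
          next
            case False
            have "{v, xs!Suc t} \<in> E" using block_clique[OF bg B0b vB0(1) uB] False by simp
            then have "walk E (v # ?zs)" using walk_Cons[OF wz] hz by simp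
            then have "P (v # ?zs)" using lz lW wz by (simp add: P_def walk_def)
            moreover have "length (v # ?zs) < length xs" using t by simp
            ultimately show False using minl[of "v # ?zs"] by simp
          qed
        qed
      qed
      then show ?thesis using ne by (simp add: x1_def last_conv_nth)
    qed
    have claimB: "\<not> meets B0 v W"
    proof
      assume "meets B0 v W"
      then obtain w' where w': "w' \<in> W" "reach (GB B0) v w'" by (auto simp: meets_def)
      have "reach F w' (last xs)" using W(5) w' lW by (simp add: connected_graph_def)
      moreover have "\<not> reach (GB B0) v (last xs)"
      proof
        assume "reach (GB B0) v (last xs)"
        from reach_trans[OF this reach_sym[OF claimA]] have "reach (GB B0) v x1" .
        then show False using block_sep[OF sg bg B0b vB0 vx1(1)] by (simp add: GB_def)
      qed
      ultimately have "\<exists>p q. {p,q} \<in> F \<and> reach (GB B0) v p \<and> \<not> reach (GB B0) v q"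
        using reach_cross[of F w' "last xs" "\<lambda>z. reach (GB B0) v z"] w'(2) by simp
      then obtain p q where pq': "{p,q} \<in> F \<and> reach (GB B0) v p \<and> \<not> reach (GB B0) v q" by blast
      have pq: "{p,q} \<in> F" "reach (GB B0) v p" "\<not> reach (GB B0) v q" using pq' by auto
      have pqE: "{p,q} \<in> E" using pq(1) W(3) by blast
      have "{p,q} \<in> induced_edges E B0"
      proof (rule ccontr)
        assume "{p,q} \<notin> induced_edges E B0"
        then have "{p,q} \<in> GB B0" using pqE by (simp add: GB_def)
        then have "reach (GB B0) v q" using reach_step[OF pq(2)] by blast
        then show False using pq(3) by simp
      qed
      then have pB: "p \<in> B0" by (simp add: induced_edges_def)
      have "p = v"
      proof (rule ccontr)
        assume "p \<noteq> v"
        then show False using block_sep[OF sg bg B0b vB0(1) pB] pq(2) by (simp add: GB_def)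
      qed
      moreover have "p \<in> W" using W(4) pq(1) by blast
      ultimately show False using vW by simp
    qed
    have claimC: "reach (GB B) v x1" if "B \<in> blocks V E" "B \<noteq> B0" for B
    proof -
      have "{v,x1} \<notin> induced_edges E B" using edge_block_unique[OF that(1) B0(1) _ B0(2)] that(2) by blast
      then have "{v,x1} \<in> GB B" using e1 by (simp add: GB_def)
      then show ?thesis by (rule reach_edge)
    qed
    have mC: "meets B v X \<longleftrightarrow> meets B x1 X" if "B \<in> blocks V E" "B \<noteq> B0" for B X
    proof -
      have "reach (GB B) v y \<longleftrightarrow> reach (GB B) x1 y" for y
        using reach_trans[OF claimC[OF that], of y] reach_trans[OF reach_sym[OF claimC[OF that]], of y] by blast
      then show ?thesis unfolding meets_def by simp
    qed
    have Nx1: "{B\<in>blocks V E. \<not> meets B x1 W} = {B\<in>blocks V E. \<not> meets B v W} - {B0}"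
    proof -
      have "meets B0 x1 W" using claimA lW by (auto simp: meets_def)
      show ?thesis
      proof (rule set_eqI)
        fix B
        show "B \<in> {B\<in>blocks V E. \<not> meets B x1 W} \<longleftrightarrow> B \<in> {B\<in>blocks V E. \<not> meets B v W} - {B0}"
        proof (cases "B = B0")
          case True then show ?thesis using \<open>meets B0 x1 W\<close> by simp
        next
          case False
          show ?thesis
          proof (cases "B \<in> blocks V E")
            case True then show ?thesis using mC[OF True False, of W] False by simp
          qed simp
        qed
      qed
    qed
    have B0N: "B0 \<in> {B\<in>blocks V E. \<not> meets B v W}" using claimB B0(1) by simp
    have finN: "finite {B\<in>blocks V E. \<not> meets B v W}" using fin_blocks by simp
    have cardx1: "card {B\<in>blocks V E. \<not> meets B x1 W} = n - 1"
      unfolding Nx1 card_Diff_singleton[OF B0N] less.prems(2) ..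
    have "card {B\<in>blocks V E. \<not> meets B v W} > 0" using finN B0N card_gt_0_iff by blast
    then have npos: "n \<ge> 1" using less.prems(2) by simp
    from less.IH[of "n - 1" x1, OF _ vx1(2) cardx1] npos obtain ys where
      ys: "walk E ys" "hd ys = x1" "last ys \<in> W" "length ys \<le> Suc (n - 1)"
          "\<forall>x\<in>set ys. \<forall>B\<in>blocks V E. meets B x (insert x1 W)" by auto
    have yne: "ys \<noteq> []" using ys(1) by (simp add: walk_def)
    have wv: "walk E (v # ys)" using walk_Cons[OF ys(1)] ys(2) e1 by simp
    have x1m: "meets B x1 (insert v W)" if "B \<in> blocks V E" for B
    proof (cases "B = B0")
      case True then show ?thesis using claimA lW by (auto simp: meets_def)
    next
      case False then show ?thesis using reach_sym[OF claimC[OF that False]] by (auto simp: meets_def)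
    qed
    have allm: "\<forall>x\<in>set (v # ys). \<forall>B\<in>blocks V E. meets B x (insert v W)"
    proof (intro ballI)
      fix x B assume x: "x \<in> set (v # ys)" and B: "B \<in> blocks V E"
      show "meets B x (insert v W)"
      proof (cases "x = v")
        case True then show ?thesis by (auto simp: meets_def)
      next
        case False
        then have "x \<in> set ys" using x by simp
        then have "meets B x (insert x1 W)" using ys(5) B by blast
        then obtain y where y: "y \<in> insert x1 W" "reach (GB B) x y" by (auto simp: meets_def)
        show ?thesis
        proof (cases "y = x1")
          case True
          obtain y' where "y' \<in> insert v W" "reach (GB B) x1 y'" using x1m[OF B] by (auto simp: meets_def)
          then show ?thesis using reach_trans[of "GB B" x y y'] y True by (auto simp: meets_def)
        next
          case False then show ?thesis using y by (auto simp: meets_def)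
        qed
      qed
    qed
    show ?thesis
      using wv ys(3,4) yne allm npos by (intro exI[of _ "v # ys"]) auto
  qed
qed

definition phi :: "'a set \<Rightarrow> nat" where
  "phi S = (\<Sum>B\<in>blocks V E. card (comp B ` S) - 1)"

lemma phi_single: "phi {s} = 0"
  by (simp add: phi_def)

lemma phi_insert:
  assumes "S \<subseteq> V" "S \<noteq> {}" "finite S" "v \<in> V"
  shows "phi (insert v S) = phi S + card {B\<in>blocks V E. \<not> meets B v S}"
proof -
  have each: "card (comp B ` insert v S) - 1 = (card (comp B ` S) - 1) + (if \<not> meets B v S then 1 else 0)" for B
  proof -
    have iff: "comp B v \<in> comp B ` S \<longleftrightarrow> meets B v S"
    proof
      assume "comp B v \<in> comp B ` S"
      then obtain s where s: "s \<in> S" "comp B v = comp B s" by blast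
      then have "reach (GB B) v s" using comp_eq[of v s B] assms(1,4) by blast
      then show "meets B v S" using s by (auto simp: meets_def)
    next
      assume "meets B v S"
      then obtain s where s: "s \<in> S" "reach (GB B) v s" by (auto simp: meets_def)
      then have "comp B v = comp B s" using comp_eq[of v s B] assms(1,4) by blast
      then show "comp B v \<in> comp B ` S" using s by blast
    qed
    have pos: "card (comp B ` S) \<ge> 1" using assms(2,3) by (simp add: Suc_le_eq card_gt_0_iff)
    show ?thesis using iff pos assms(3) by (simp add: card_insert_if)
  qed
  have "phi (insert v S) = (\<Sum>B\<in>blocks V E. (card (comp B ` S) - 1) + (if \<not> meets B v S then 1 else 0))"
    unfolding phi_def using each by simp
  also have "\<dots> = phi S + (\<Sum>B\<in>blocks V E. (if \<not> meets B v S then 1 else 0))"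
    by (simp add: sum.distrib phi_def)
  also have "(\<Sum>B\<in>blocks V E. (if \<not> meets B v S then 1 else 0)) = card {B\<in>blocks V E. \<not> meets B v S}"
    using sum.inter_filter[OF fin_blocks, of "\<lambda>_. (1::nat)" "\<lambda>B. \<not> meets B v S"] by simp
  finally show ?thesis .
qed

lemma upper:
  assumes "finite S" "S \<noteq> {}" "S \<subseteq> V"
  shows "\<exists>W F. S \<subseteq> W \<and> W \<subseteq> V \<and> F \<subseteq> E \<and> (\<forall>e\<in>F. e \<subseteq> W) \<and> connected_graph W F \<and>
           card F \<le> phi S \<and> (\<forall>B\<in>blocks V E. \<forall>x\<in>W. meets B x S)"
  using assms
proof (induction S rule: finite_ne_induct)
  case (singleton s)
  have "connected_graph {s} {}" by (simp add: connected_graph_def)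
  moreover have "\<forall>B\<in>blocks V E. \<forall>x\<in>{s}. meets B x {s}" by (simp add: meets_def)
  ultimately show ?case using singleton by (intro exI[of _ "{s}"] exI[of _ "{}"]) (simp add: phi_single)
next
  case (insert v S)
  then have SV: "S \<subseteq> V" and vV: "v \<in> V" by auto
  from insert.IH[OF SV] obtain W F where WF: "S \<subseteq> W" "W \<subseteq> V" "F \<subseteq> E" "\<forall>e\<in>F. e \<subseteq> W"
    "connected_graph W F" "card F \<le> phi S" "\<forall>B\<in>blocks V E. \<forall>x\<in>W. meets B x S" by blast
  have Wne: "W \<noteq> {}" using WF(5) by (simp add: connected_graph_def)
  have mWS: "meets B v W \<longleftrightarrow> meets B v S" if Bb: "B \<in> blocks V E" for B
  proof
    assume "meets B v W"
    then obtain w where w: "w \<in> W" "reach (GB B) v w" by (auto simp: meets_def)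
    then obtain s where s: "s \<in> S" "reach (GB B) w s" using WF(7) Bb by (auto simp: meets_def)
    show "meets B v S" using s reach_trans[OF w(2) s(2)] by (auto simp: meets_def)
  next
    assume "meets B v S" then show "meets B v W" using WF(1) by (auto simp: meets_def)
  qed
  have Neq: "{B\<in>blocks V E. \<not> meets B v W} = {B\<in>blocks V E. \<not> meets B v S}" using mWS by blast
  define n where "n = card {B\<in>blocks V E. \<not> meets B v S}"
  from walk_to_W[OF WF(2) Wne WF(3,4,5) vV, of n] Neq obtain xs where
    xs: "walk E xs" "hd xs = v" "last xs \<in> W" "length xs \<le> Suc n"
        "\<forall>x\<in>set xs. \<forall>B\<in>blocks V E. meets B x (insert v W)" unfolding n_def by auto
  have ne: "xs \<noteq> []" using xs(1) by (simp add: walk_def)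
  define W' where "W' = W \<union> set xs"
  define F' where "F' = F \<union> wedges xs"
  have vW': "v \<in> W'" using hd_in_set[OF ne] xs(2) by (simp add: W'_def)
  have W'V: "W' \<subseteq> V" using WF(2) walk_in_V[OF xs(1)] xs(2) vV by (auto simp: W'_def)
  have F'E: "F' \<subseteq> E" using WF(3) wedges_sub[OF xs(1)] by (auto simp: F'_def)
  have F'W: "\<forall>e\<in>F'. e \<subseteq> W'" using WF(4) wedges_in_set by (fastforce simp: F'_def W'_def)
  have hubc: "reach F' z (last xs)" if "z \<in> W'" for z
  proof (cases "z \<in> W")
    case True
    have "reach F z (last xs)" using WF(5) True xs(3) by (simp add: connected_graph_def)
    then show ?thesis by (rule reach_mono) (simp add: F'_def)
  next
    case False
    then have "z \<in> set xs" using that by (simp add: W'_def)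
    then obtain i where i: "i < length xs" "z = xs!i" by (auto simp: in_set_conv_nth)
    have "reach (wedges xs) (xs!i) (xs!(length xs - 1))" using walk_wedges_reach[of i xs "length xs - 1"] i ne by simp
    then have "reach F' (xs!i) (xs!(length xs - 1))" by (rule reach_mono) (simp add: F'_def)
    then show ?thesis using i ne by (simp add: last_conv_nth)
  qed
  have cW': "connected_graph W' F'"
    unfolding connected_graph_def
  proof (intro conjI ballI)
    show "W' \<noteq> {}" using vW' by blast
  next
    fix x y assume "x \<in> W'" "y \<in> W'"
    show "reach F' x y" using reach_trans[OF hubc[OF \<open>x \<in> W'\<close>] reach_sym[OF hubc[OF \<open>y \<in> W'\<close>]]] .
  qed
  have "card F' \<le> card F + card (wedges xs)" unfolding F'_def by (rule card_Un_le)
  also have "\<dots> \<le> phi S + n" using WF(6) card_wedges[of xs] xs(4) by simp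
  also have "\<dots> = phi (insert v S)" using phi_insert[OF SV insert.hyps(2) insert.hyps(1) vV] by (simp add: n_def)
  finally have cardF': "card F' \<le> phi (insert v S)" .
  have hull: "\<forall>B\<in>blocks V E. \<forall>x\<in>W'. meets B x (insert v S)"
  proof (intro ballI)
    fix B x assume B: "B \<in> blocks V E" and x: "x \<in> W'"
    show "meets B x (insert v S)"
    proof (cases "x \<in> W")
      case True then show ?thesis using WF(7) B by (auto simp: meets_def)
    next
      case False
      then have "x \<in> set xs" using x by (simp add: W'_def)
      then have "meets B x (insert v W)" using xs(5) B by blast
      then obtain y where y: "y \<in> insert v W" "reach (GB B) x y" by (auto simp: meets_def)
      show ?thesis
      proof (cases "y = v")
        case True then show ?thesis using y by (auto simp: meets_def)
      next
        case False
        then have "y \<in> W" using y by simp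
        then obtain s where s: "s \<in> S" "reach (GB B) y s" using WF(7) B by (auto simp: meets_def)
        show ?thesis using s reach_trans[OF y(2) s(2)] by (auto simp: meets_def)
      qed
    qed
  qed
  have "insert v S \<subseteq> W'" using WF(1) vW' by (auto simp: W'_def)
  then show ?case using W'V F'E F'W cW' cardF' hull by blast
qed

lemma steiner_dist_eq:
  assumes "finite S" "S \<noteq> {}" "S \<subseteq> V"
  shows "steiner_dist V E S = phi S"
  unfolding steiner_dist_def
proof (rule Least_equality)
  from upper[OF assms] obtain W F where WF: "S \<subseteq> W" "W \<subseteq> V" "F \<subseteq> E" "\<forall>e\<in>F. e \<subseteq> W"
    "connected_graph W F" "card F \<le> phi S" by blast
  have "phi S \<le> card F" using lower[OF WF(1-5)] by (simp add: phi_def)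
  then have "card F = phi S" using WF(6) by simp
  then show "\<exists>W F. S \<subseteq> W \<and> W \<subseteq> V \<and> F \<subseteq> E \<and> (\<forall>e\<in>F. e \<subseteq> W) \<and> connected_graph W F \<and> card F = phi S"
    using WF by blast
next
  fix m assume "\<exists>W F. S \<subseteq> W \<and> W \<subseteq> V \<and> F \<subseteq> E \<and> (\<forall>e\<in>F. e \<subseteq> W) \<and> connected_graph W F \<and> card F = m"
  then obtain W F where WF: "S \<subseteq> W" "W \<subseteq> V" "F \<subseteq> E" "\<forall>e\<in>F. e \<subseteq> W"
    "connected_graph W F" "card F = m" by blast
  show "phi S \<le> m" using lower[OF WF(1-5)] WF(6) by (simp add: phi_def)
qed

end


lemma fiber_count:
  fixes C :: "'a set set"
  assumes finV: "finite V" and part: "\<Union>C = V" "\<And>c c'. c\<in>C \<Longrightarrow> c'\<in>C \<Longrightarrow> c \<noteq> c' \<Longrightarrow> c \<inter> c' = {}"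
    and l: "l \<in> C \<rightarrow>\<^sub>E {0..k}" "sum l C = k"
  shows "card {S. S \<subseteq> V \<and> card S = k \<and> restrict (\<lambda>c. card (S \<inter> c)) C = l} = (\<Prod>c\<in>C. card c choose l c)"
proof -
  have finC: "finite C" using finite_UnionD[of C] finV part(1) by simp
  have finc: "finite c" if "c \<in> C" for c
  proof -
    have "c \<subseteq> V" using part(1) that by blast
    then show ?thesis using finV by (rule finite_subset)
  qed
  let ?A = "{S. S \<subseteq> V \<and> card S = k \<and> restrict (\<lambda>c. card (S \<inter> c)) C = l}"
  let ?T = "PiE C (\<lambda>c. {T. T \<subseteq> c \<and> card T = l c})"
  let ?f = "\<lambda>S. restrict (\<lambda>c. S \<inter> c) C"
  have inj: "inj_on ?f ?A"
  proof (rule inj_onI)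
    fix S S' assume S: "S \<in> ?A" and S': "S' \<in> ?A" and eq: "?f S = ?f S'"
    have "S \<inter> c = S' \<inter> c" if "c \<in> C" for c
      using fun_cong[OF eq, of c] that by simp
    note eqc = this
    have SV: "S \<subseteq> V" "S' \<subseteq> V" using S S' by auto
    show "S = S'"
    proof (rule set_eqI)
      fix x
      show "x \<in> S \<longleftrightarrow> x \<in> S'"
      proof (cases "x \<in> V")
        case True
        then obtain c where c: "c \<in> C" "x \<in> c" using part(1) by blast
        then show ?thesis using eqc[OF c(1)] by blast
      next
        case False then show ?thesis using SV by blast
      qed
    qed
  qed
  have img: "?f ` ?A = ?T"
  proof (rule set_eqI, rule iffI)
    fix P assume "P \<in> ?f ` ?A"
    then obtain S where S: "S \<in> ?A" "P = ?f S" by blast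
    have "S \<inter> c \<subseteq> c \<and> card (S \<inter> c) = l c" if "c \<in> C" for c
      using fun_cong[OF conjunct2[OF conjunct2[OF S(1)[simplified]]], of c] that by simp
    then show "P \<in> ?T" using S(2) by (simp add: restrict_PiE_iff)
  next
    fix P assume P: "P \<in> ?T"
    define S where "S = (\<Union>c\<in>C. P c)"
    have Pc: "P c \<subseteq> c" "card (P c) = l c" if "c \<in> C" for c using PiE_mem[OF P that] by auto
    have SV: "S \<subseteq> V" using Pc part(1) by (auto simp: S_def)
    have Sc: "S \<inter> c = P c" if "c \<in> C" for c
    proof
      show "P c \<subseteq> S \<inter> c" using Pc(1)[OF that] that by (auto simp: S_def)
    next
      show "S \<inter> c \<subseteq> P c"
      proof
        fix x assume "x \<in> S \<inter> c"
        then obtain c' where c': "c' \<in> C" "x \<in> P c'" "x \<in> c" by (auto simp: S_def)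
        then have "x \<in> c'" using Pc(1) by blast
        then have "c' = c" using part(2)[OF c'(1) that] c'(3) by blast
        then show "x \<in> P c" using c' by simp
      qed
    qed
    have cardS: "card S = k"
    proof -
      have "card S = (\<Sum>c\<in>C. card (P c))"
        unfolding S_def
      proof (rule card_UN_disjoint[OF finC])
        show "\<forall>c\<in>C. finite (P c)"
        proof
          fix c assume c: "c \<in> C" show "finite (P c)" using finite_subset[OF Pc(1)[OF c] finc[OF c]] .
        qed
        show "\<forall>c\<in>C. \<forall>c'\<in>C. c \<noteq> c' \<longrightarrow> P c \<inter> P c' = {}" using Pc(1) part(2) by blast
      qed
      also have "\<dots> = sum l C" using Pc(2) by simp
      finally show ?thesis using l(2) by simp
    qed
    have fS: "?f S = P"
    proof
      fix c show "?f S c = P c"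
      proof (cases "c \<in> C")
        case True then show ?thesis using Sc[OF True] by simp
      next
        case False then show ?thesis using PiE_arb[OF P False] by simp
      qed
    qed
    have "restrict (\<lambda>c. card (S \<inter> c)) C = l"
    proof
      fix c show "restrict (\<lambda>c. card (S \<inter> c)) C c = l c"
      proof (cases "c \<in> C")
        case True then show ?thesis using Sc[OF True] Pc(2)[OF True] by simp
      next
        case False then show ?thesis using PiE_arb[OF l(1) False] by simp
      qed
    qed
    then have "S \<in> ?A" using SV cardS by simp
    then show "P \<in> ?f ` ?A" using fS by force
  qed
  have "card ?A = card ?T" using card_image[OF inj] img by simp
  also have "\<dots> = (\<Prod>c\<in>C. card {T. T \<subseteq> c \<and> card T = l c})" by (rule card_PiE[OF finC])
  also have "\<dots> = (\<Prod>c\<in>C. card c choose l c)"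
    by (rule prod.cong) (simp_all add: n_subsets finc)
  finally show ?thesis .
qed

lemma count_partition:
  fixes C :: "'a set set"
  assumes finV: "finite V" and part: "\<Union>C = V" "\<And>c c'. c\<in>C \<Longrightarrow> c'\<in>C \<Longrightarrow> c \<noteq> c' \<Longrightarrow> c \<inter> c' = {}"
    and k: "k \<ge> 1"
  shows "(\<Sum>S\<in>{S. S \<subseteq> V \<and> card S = k}. int (card {c\<in>C. c \<inter> S \<noteq> {}}) - 1) =
     (if card C \<le> 1 then 0 else (\<Sum>l\<in>{l. l \<in> C \<rightarrow>\<^sub>E {0..k} \<and> sum l C = k \<and> (\<forall>c\<in>C. l c < k)}.
        int (\<Prod>c\<in>C. card c choose l c) * (int (card {c\<in>C. l c \<noteq> 0}) - 1)))"
proof -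
  have finC: "finite C" using finite_UnionD[of C] finV part(1) by simp
  define Sk where "Sk = {S. S \<subseteq> V \<and> card S = k}"
  define \<delta> where "\<delta> S = restrict (\<lambda>c. card (S \<inter> c)) C" for S
  define G where "G l = int (card {c\<in>C. l c \<noteq> 0}) - 1" for l :: "'a set \<Rightarrow> nat"
  define L0 where "L0 = {l. l \<in> C \<rightarrow>\<^sub>E {0..k} \<and> sum l C = k}"
  define L where "L = {l. l \<in> C \<rightarrow>\<^sub>E {0..k} \<and> sum l C = k \<and> (\<forall>c\<in>C. l c < k)}"
  define T where "T l = int (\<Prod>c\<in>C. card c choose l c) * G l" for l
  have finSk: "finite Sk"
  proof -
    have "Sk \<subseteq> Pow V" by (auto simp: Sk_def)
    then show ?thesis using finV by (simp add: finite_subset)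
  qed
  have finL0: "finite L0"
  proof -
    have "L0 \<subseteq> C \<rightarrow>\<^sub>E {0..k}" by (auto simp: L0_def)
    moreover have "finite (C \<rightarrow>\<^sub>E {0..k})" using finC by (simp add: finite_PiE)
    ultimately show ?thesis by (rule finite_subset)
  qed
  have step1: "int (card {c\<in>C. c \<inter> S \<noteq> {}}) - 1 = G (\<delta> S)" if S: "S \<in> Sk" for S
  proof -
    have finS: "finite S" using S finV by (auto simp: Sk_def intro: finite_subset)
    have "{c\<in>C. c \<inter> S \<noteq> {}} = {c\<in>C. \<delta> S c \<noteq> 0}"
    proof (rule Collect_cong)
      fix c
      have "c \<in> C \<Longrightarrow> card (S \<inter> c) \<noteq> 0 \<longleftrightarrow> c \<inter> S \<noteq> {}" using finS by auto
      then show "(c \<in> C \<and> c \<inter> S \<noteq> {}) = (c \<in> C \<and> \<delta> S c \<noteq> 0)" by (auto simp: \<delta>_def)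
    qed
    then show ?thesis by (simp add: G_def)
  qed
  have dmap: "\<delta> ` Sk \<subseteq> L0"
  proof
    fix l assume "l \<in> \<delta> ` Sk"
    then obtain S where S: "S \<in> Sk" "l = \<delta> S" by blast
    have SV: "S \<subseteq> V" and cS: "card S = k" using S(1) by (simp_all add: Sk_def)
    have finS: "finite S" using SV finV by (rule finite_subset)
    have le: "card (S \<inter> c) \<le> k" for c using card_mono[OF finS, of "S \<inter> c"] cS by simp
    have p: "\<delta> S \<in> C \<rightarrow>\<^sub>E {0..k}" unfolding \<delta>_def using le by (simp add: restrict_PiE_iff)
    have "sum (\<delta> S) C = (\<Sum>c\<in>C. card (S \<inter> c))" by (rule sum.cong) (simp_all add: \<delta>_def)
    also have "\<dots> = card (\<Union>c\<in>C. S \<inter> c)"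
      by (rule card_UN_disjoint[symmetric]) (use finC finS part(2) in auto)
    also have "(\<Union>c\<in>C. S \<inter> c) = S" using SV part(1) by blast
    finally have "sum (\<delta> S) C = k" using cS by simp
    then show "l \<in> L0" using p S(2) by (simp add: L0_def)
  qed
  have fib: "(\<Sum>S\<in>{S\<in>Sk. \<delta> S = l}. G (\<delta> S)) = T l" if l: "l \<in> L0" for l
  proof -
    have seq: "{S\<in>Sk. \<delta> S = l} = {S. S \<subseteq> V \<and> card S = k \<and> restrict (\<lambda>c. card (S \<inter> c)) C = l}"
      by (auto simp: Sk_def \<delta>_def)
    have cnt: "card {S\<in>Sk. \<delta> S = l} = (\<Prod>c\<in>C. card c choose l c)"
      unfolding seq by (rule fiber_count[OF finV part]) (use l in \<open>simp_all add: L0_def\<close>)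
    have "(\<Sum>S\<in>{S\<in>Sk. \<delta> S = l}. G (\<delta> S)) = (\<Sum>S\<in>{S\<in>Sk. \<delta> S = l}. G l)" by simp
    also have "\<dots> = int (card {S\<in>Sk. \<delta> S = l}) * G l" by simp
    finally show ?thesis unfolding cnt T_def .
  qed
  have G0: "G l = 0" if l: "l \<in> L0" and cond: "card C \<le> 1 \<or> (\<exists>c\<in>C. l c \<ge> k)" for l
  proof -
    have sl: "sum l C = k" using l by (simp add: L0_def)
    have ne: "{c\<in>C. l c \<noteq> 0} \<noteq> {}"
    proof
      assume "{c\<in>C. l c \<noteq> 0} = {}"
      then have "sum l C = 0" by (intro sum.neutral) blast
      then show False using sl k by simp
    qed
    have fin: "finite {c\<in>C. l c \<noteq> 0}" using finC by simp
    have le1: "card {c\<in>C. l c \<noteq> 0} \<le> 1"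
      using cond
    proof
      assume "card C \<le> 1"
      then show ?thesis using card_mono[OF finC, of "{c\<in>C. l c \<noteq> 0}"] by simp
    next
      assume "\<exists>c\<in>C. l c \<ge> k"
      then obtain c0 where c0: "c0 \<in> C" "l c0 \<ge> k" by blast
      have "sum l C = l c0 + sum l (C - {c0})" using sum.remove[OF finC c0(1)] by simp
      then have "sum l (C - {c0}) = 0" using sl c0(2) by simp
      then have "\<forall>c\<in>C - {c0}. l c = 0" using finC by simp
      then have "{c\<in>C. l c \<noteq> 0} \<subseteq> {c0}"
      proof (intro subsetI)
        fix c assume h: "\<forall>c\<in>C - {c0}. l c = 0" and c: "c \<in> {c\<in>C. l c \<noteq> 0}"
        have "c = c0"
        proof (rule ccontr)
          assume "c \<noteq> c0"
          then have "c \<in> C - {c0}" using c by simp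
          then show False using h c by simp
        qed
        then show "c \<in> {c0}" by simp
      qed
      then show ?thesis using card_mono[of "{c0}"] by fastforce
    qed
    have "card {c\<in>C. l c \<noteq> 0} = 1" using le1 ne fin card_0_eq[OF fin] by linarith
    then show ?thesis by (simp add: G_def)
  qed
  have "(\<Sum>S\<in>{S. S \<subseteq> V \<and> card S = k}. int (card {c\<in>C. c \<inter> S \<noteq> {}}) - 1) = (\<Sum>S\<in>Sk. G (\<delta> S))"
    unfolding Sk_def[symmetric] by (rule sum.cong) (simp_all add: step1)
  also have "\<dots> = (\<Sum>l\<in>L0. \<Sum>S\<in>{S\<in>Sk. \<delta> S = l}. G (\<delta> S))"
    by (rule sum.group[symmetric, OF finSk finL0 dmap])
  also have "\<dots> = (\<Sum>l\<in>L0. T l)" by (rule sum.cong[OF refl]) (rule fib)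
  finally have main: "(\<Sum>S\<in>{S. S \<subseteq> V \<and> card S = k}. int (card {c\<in>C. c \<inter> S \<noteq> {}}) - 1) = (\<Sum>l\<in>L0. T l)" .
  show ?thesis
  proof (cases "card C \<le> 1")
    case True
    have "(\<Sum>l\<in>L0. T l) = 0" by (rule sum.neutral) (use G0 True in \<open>simp add: T_def\<close>)
    then show ?thesis using main True by simp
  next
    case False
    have "(\<Sum>l\<in>L0. T l) = (\<Sum>l\<in>L. T l)"
    proof (rule sum.mono_neutral_right[OF finL0])
      show "L \<subseteq> L0" by (auto simp: L_def L0_def)
    next
      show "\<forall>l\<in>L0 - L. T l = 0"
      proof
        fix l assume l: "l \<in> L0 - L"
        then have "\<exists>c\<in>C. l c \<ge> k" by (auto simp: L_def L0_def not_less)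
        then show "T l = 0" using G0 l by (simp add: T_def)
      qed
    qed
    then show ?thesis using main False by (simp add: L_def T_def G_def)
  qed
qed


lemma components_union: "\<Union>(components W D) = W"
proof
  show "\<Union>(components W D) \<subseteq> W" by (auto simp: components_def)
next
  show "W \<subseteq> \<Union>(components W D)"
  proof
    fix x assume x: "x \<in> W"
    then have "x \<in> {y\<in>W. reach D x y}" by simp
    moreover have "{y\<in>W. reach D x y} \<in> components W D" using x by (auto simp: components_def)
    ultimately show "x \<in> \<Union>(components W D)" by blast
  qed
qed

lemma components_disjoint:
  assumes "c \<in> components W D" "c' \<in> components W D" "c \<noteq> c'"
  shows "c \<inter> c' = {}"
proof (rule ccontr)
  assume "c \<inter> c' \<noteq> {}"
  then obtain z where z: "z \<in> c" "z \<in> c'" by blast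
  obtain x where x: "x \<in> W" "c = cls W D x" using assms(1) by (auto simp: components_cls)
  obtain y where y: "y \<in> W" "c' = cls W D y" using assms(2) by (auto simp: components_cls)
  have "reach D x z" "reach D y z" "z \<in> W" using z x y by (auto simp: cls_def)
  then have "reach D x y" using reach_trans[of D x z y] reach_sym[of D y z] by blast
  then have "c = c'" using cls_eq[OF x(1) y(1)] x(2) y(2) by simp
  then show False using assms(3) by simp
qed

context bgraph
begin

lemma comp_image:
  assumes "S \<subseteq> V"
  shows "comp B ` S = {c\<in>components V (GB B). c \<inter> S \<noteq> {}}"
proof (rule set_eqI, rule iffI)
  fix c assume "c \<in> comp B ` S"
  then obtain s where s: "s \<in> S" "c = comp B s" by blast
  have "s \<in> V" using s assms by blast
  then have "s \<in> c" using s by (simp add: comp_def cls_def)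
  moreover have "c \<in> components V (GB B)" using s \<open>s \<in> V\<close> by (simp add: components_cls comp_def)
  ultimately show "c \<in> {c\<in>components V (GB B). c \<inter> S \<noteq> {}}" using s by blast
next
  fix c assume "c \<in> {c\<in>components V (GB B). c \<inter> S \<noteq> {}}"
  then obtain x s where x: "x \<in> V" "c = cls V (GB B) x" and s: "s \<in> S" "s \<in> c"
    by (auto simp: components_cls)
  have sV: "s \<in> V" using s assms by blast
  have "reach (GB B) x s" using s x by (simp add: cls_def)
  then have "cls V (GB B) x = cls V (GB B) s" using cls_eq[OF x(1) sV] by simp
  then show "c \<in> comp B ` S" using s x by (simp add: comp_def)
qed

lemma block_term:
  assumes k: "k \<ge> 1"
  shows "(\<Sum>S\<in>{S. S \<subseteq> V \<and> card S = k}. int (card (comp B ` S)) - 1) = N'_k k V (delete_block_edges E B)"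
proof -
  have "(\<Sum>S\<in>{S. S \<subseteq> V \<and> card S = k}. int (card (comp B ` S)) - 1) =
        (\<Sum>S\<in>{S. S \<subseteq> V \<and> card S = k}. int (card {c\<in>components V (GB B). c \<inter> S \<noteq> {}}) - 1)"
    by (rule sum.cong) (simp_all add: comp_image)
  also have "\<dots> = N'_k k V (GB B)"
    unfolding N'_k_def Let_def
    by (rule count_partition[OF finV components_union components_disjoint k])
  finally show ?thesis by (simp add: GB_def delete_block_edges_def)
qed

end

theorem theorem1:
  fixes V :: "'a set" and E :: "'a set set" and k :: nat
  assumes "simple_graph V E"
    and "connected_graph V E"
    and "block_graph V E"
    and "k \<ge> 2"
  shows "int (steiner_wiener k V E) =
         (\<Sum>B\<in>blocks V E. N'_k k V (delete_block_edges E B))"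
proof -
  interpret bgraph V E using assms(1-3) by unfold_locales
  have k1: "k \<ge> 1" using assms(4) by simp
  let ?Sk = "{S. S \<subseteq> V \<and> card S = k}"
  have finSk: "finite ?Sk"
  proof -
    have "?Sk \<subseteq> Pow V" by auto
    then show ?thesis using finV by (simp add: finite_subset)
  qed
  have each: "int (steiner_dist V E S) = (\<Sum>B\<in>blocks V E. int (card (comp B ` S)) - 1)" if S: "S \<in> ?Sk" for S
  proof -
    have SV: "S \<subseteq> V" and cS: "card S = k" using S by auto
    have finS: "finite S" using SV finV by (rule finite_subset)
    have Sne: "S \<noteq> {}" using cS assms(4) by auto
    have pos: "card (comp B ` S) \<ge> 1" for B using finS Sne by (simp add: Suc_le_eq card_gt_0_iff)
    have "int (steiner_dist V E S) = int (phi S)" using steiner_dist_eq[OF finS Sne SV] by simp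
    also have "\<dots> = (\<Sum>B\<in>blocks V E. int (card (comp B ` S) - 1))" by (simp add: phi_def)
    also have "\<dots> = (\<Sum>B\<in>blocks V E. int (card (comp B ` S)) - 1)"
      by (rule sum.cong) (use pos in \<open>simp_all add: of_nat_diff\<close>)
    finally show ?thesis .
  qed
  have "int (steiner_wiener k V E) = (\<Sum>S\<in>?Sk. int (steiner_dist V E S))"
    by (simp add: steiner_wiener_def)
  also have "\<dots> = (\<Sum>S\<in>?Sk. \<Sum>B\<in>blocks V E. int (card (comp B ` S)) - 1)"
    by (rule sum.cong[OF refl]) (rule each)
  also have "\<dots> = (\<Sum>B\<in>blocks V E. \<Sum>S\<in>?Sk. int (card (comp B ` S)) - 1)"
    by (rule sum.swap)
  also have "\<dots> = (\<Sum>B\<in>blocks V E. N'_k k V (delete_block_edges E B))"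
    by (rule sum.cong[OF refl]) (rule block_term[OF k1])
  finally show ?thesis .
qed

end
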